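(* For any dimension $d$ and any $d$-dimensional freezing cellular automaton $F$, there is a $d$-dimensional freezing cellular automaton $G$ with neighborhood $\mathrm{VN}_d$ that simulates $F$.
   Context: A $d$-dimensional cellular automaton (CA) is $F=(d,Q,N,f)$ with $Q$ finite, $N\subset\mathbb{Z}^d$ finite, $f:Q^N\to Q$, global map $F(c)_z=f(c|_{z+N})$. A CA is freezing if there is a partial order $\preceq$ on $Q$ with $F(c)_z\preceq c_z$ for all configurations $c$ and cells $z$. $\mathrm{VN}_d=\{\vec 0,\pm e_1,\dots,\pm e_d\}$. Simulation: $F'$ (states $Q_{F'}$) simulates $G'$ (states $Q_{G'}$), both of dimension $d$, if there exist $T>0$, a rectangular block $B\subseteq\mathbb{Z}^d$ with size-vector $b$, a finite $C\subset\mathbb{Z}^d$ with $\vec 0\in C$, and $\phi:Q_{G'}^C\to Q_{F'}^B$ such that $\bar\phi(c)_{bz+r}=\phi(c|_{z+C})_r$ ($z\in\mathbb{Z}^d,r\in B$, $bz$ componentwise) defines an injective map $\bar\phi$ with $\bar\phi(G'(c))=F'^T(\bar\phi(c))$ for all configurations $c$. *)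

theory Defs
  imports "HOL-Analysis.Analysis"
begin

text \<open>Cells of the d-dimensional lattice are integer vectors indexed by a finite type 'd
(d = CARD('d)). A configuration over state set Q is a map from cells to states
with all values in Q.\<close>

type_synonym 'd cell = "int ^ 'd"

definition configs :: "'q set \<Rightarrow> ('d::finite cell \<Rightarrow> 'q) set" where
  "configs Q = {c. \<forall>z. c z \<in> Q}"

definition pat :: "'d::finite cell set \<Rightarrow> ('d cell \<Rightarrow> 'q) \<Rightarrow> 'd cell \<Rightarrow> ('d cell \<Rightarrow> 'q)" where
  "pat N c z = (\<lambda>n. if n \<in> N then c (z + n) else undefined)"

definition global :: "'d::finite cell set \<Rightarrow> (('d cell \<Rightarrow> 'q) \<Rightarrow> 'q) \<Rightarrow> ('d cell \<Rightarrow> 'q) \<Rightarrow> ('d cell \<Rightarrow> 'q)" where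
  "global N f c = (\<lambda>z. f (pat N c z))"

definition is_CA :: "'q set \<Rightarrow> 'd::finite cell set \<Rightarrow> (('d cell \<Rightarrow> 'q) \<Rightarrow> 'q) \<Rightarrow> bool" where
  "is_CA Q N f \<longleftrightarrow> finite Q \<and> finite N \<and>
     (\<forall>p. (\<forall>n\<in>N. p n \<in> Q) \<and> (\<forall>n. n \<notin> N \<longrightarrow> p n = undefined) \<longrightarrow> f p \<in> Q)"

definition partial_order_on_set :: "'q set \<Rightarrow> ('q \<Rightarrow> 'q \<Rightarrow> bool) \<Rightarrow> bool" where
  "partial_order_on_set Q le \<longleftrightarrow>
     (\<forall>x\<in>Q. le x x) \<and>
     (\<forall>x\<in>Q. \<forall>y\<in>Q. le x y \<and> le y x \<longrightarrow> x = y) \<and>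
     (\<forall>x\<in>Q. \<forall>y\<in>Q. \<forall>z\<in>Q. le x y \<and> le y z \<longrightarrow> le x z)"

definition freezing :: "'q set \<Rightarrow> 'd::finite cell set \<Rightarrow> (('d cell \<Rightarrow> 'q) \<Rightarrow> 'q) \<Rightarrow> bool" where
  "freezing Q N f \<longleftrightarrow> (\<exists>le. partial_order_on_set Q le \<and>
     (\<forall>c\<in>configs Q. \<forall>z. le (global N f c z) (c z)))"

definition VN :: "'d::finite cell set" where
  "VN = insert 0 {axis i s | i s. s = 1 \<or> s = -1}"

definition block :: "'d::finite cell \<Rightarrow> 'd cell set" where
  "block b = {r. \<forall>i. 0 \<le> r $ i \<and> r $ i < b $ i}"

text \<open>The block map: phibar(c)_{b z + r} = phi(c|_{z+C})_r for r in the block;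
every cell x decomposes uniquely as x = b z + r with z = x div b, r = x mod b (componentwise).\<close>
definition blockmap :: "'d::finite cell \<Rightarrow> 'd cell set \<Rightarrow> (('d cell \<Rightarrow> 'q) \<Rightarrow> ('d cell \<Rightarrow> 'p))
     \<Rightarrow> ('d cell \<Rightarrow> 'q) \<Rightarrow> ('d cell \<Rightarrow> 'p)" where
  "blockmap b C phi c = (\<lambda>x. phi (pat C c (\<chi> i. x $ i div b $ i)) (\<chi> i. x $ i mod b $ i))"

definition simulates :: "'p set \<Rightarrow> 'd::finite cell set \<Rightarrow> (('d cell \<Rightarrow> 'p) \<Rightarrow> 'p)
     \<Rightarrow> 'q set \<Rightarrow> 'd cell set \<Rightarrow> (('d cell \<Rightarrow> 'q) \<Rightarrow> 'q) \<Rightarrow> bool" where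
  "simulates QF NF fF QG NG fG \<longleftrightarrow>
     (\<exists>T::nat. T > 0 \<and> (\<exists>b. (\<forall>i. b $ i > 0) \<and> (\<exists>C. finite C \<and> 0 \<in> C \<and>
       (\<exists>phi. (\<forall>c\<in>configs QG. blockmap b C phi c \<in> configs QF) \<and>
              inj_on (blockmap b C phi) (configs QG) \<and>
              (\<forall>c\<in>configs QG. blockmap b C phi (global NG fG c)
                                 = (global NF fF ^^ T) (blockmap b C phi c))))))"

end

theory Submission
  imports Defs
begin


definition l1 :: "'d::finite cell \<Rightarrow> int" where "l1 n = (\<Sum>i\<in>UNIV. \<bar>n $ i\<bar>)"

lemma l1_nonneg: "0 \<le> l1 n" unfolding l1_def by (simp add: sum_nonneg)

lemma l1_zero[simp]: "l1 0 = 0" unfolding l1_def by simp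

lemma l1_add: "l1 (a + b) \<le> l1 a + l1 b"
  unfolding l1_def by (simp add: sum.distrib[symmetric] sum_mono abs_triangle_ineq)

lemma VN_l1: "e \<in> VN \<Longrightarrow> l1 e \<le> 1"
proof -
  assume "e \<in> VN"
  then consider "e = 0" | i s where "e = axis i s" "s = 1 \<or> s = -1" unfolding VN_def by blast
  then show ?thesis
  proof cases
    case 1 then show ?thesis by simp
  next
    case 2
    have "l1 e = (\<Sum>j\<in>UNIV. if j = i then 1 else 0)"
      unfolding l1_def 2 by (rule sum.cong) (use 2 in \<open>auto simp: axis_def\<close>)
    then show ?thesis by simp
  qed
qed

lemma finite_VN: "finite (VN :: 'd::finite cell set)"
proof -
  have "VN = insert 0 ((\<lambda>(i,s). axis i s) ` (UNIV \<times> {1, -1::int}) :: 'd cell set)"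
    unfolding VN_def by auto
  moreover have "finite ((\<lambda>(i,s). axis i s) ` (UNIV \<times> {1, -1::int}) :: 'd cell set)"
    by (intro finite_imageI finite_cartesian_product) auto
  ultimately show ?thesis by (metis finite_insert)
qed

lemma zero_VN: "0 \<in> VN" unfolding VN_def by simp

lemma finite_cube: "finite {n::'d::finite cell. \<forall>i. \<bar>n $ i\<bar> \<le> R}"
proof -
  have "{n::'d cell. \<forall>i. \<bar>n $ i\<bar> \<le> R} \<subseteq> vec_lambda ` (PiE UNIV (\<lambda>_. {-R..R}))"
  proof
    fix n :: "'d cell" assume "n \<in> {n. \<forall>i. \<bar>n $ i\<bar> \<le> R}"
    have "\<forall>i. -R \<le> n $ i \<and> n $ i \<le> R" 
    proof
      fix i show "-R \<le> n $ i \<and> n $ i \<le> R" using \<open>n \<in> _\<close> abs_le_iff[of "n $ i" R] by auto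
    qed
    then have "vec_nth n \<in> PiE UNIV (\<lambda>_. {-R..R})" by auto
    then show "n \<in> vec_lambda ` (PiE UNIV (\<lambda>_. {-R..R}))" using image_eqI[where x="vec_nth n" and f=vec_lambda] by simp
  qed
  then show ?thesis by (rule finite_subset) (simp add: finite_PiE)
qed

lemma geo:
  fixes n :: "'d::finite cell" and t :: int
  assumes n: "\<forall>i. \<bar>n $ i\<bar> \<le> R" and t: "1 \<le> t" "l1 n \<le> t"
  shows "\<exists>e\<in>VN. (\<forall>i. \<bar>(n - e) $ i\<bar> \<le> R) \<and> l1 (n - e) < t"
proof (cases "n = 0")
  case True then show ?thesis 
  proof -
    have "0 \<le> R" using n abs_ge_zero order_trans by blast
    then show ?thesis using t zero_VN True by (auto intro!: bexI[of _ 0])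
  qed
next
  case False
  then obtain i where i: "n $ i \<noteq> 0" by (metis vec_eq_iff zero_index)
  define e where "e = axis i (sgn (n $ i))"
  have eV: "e \<in> VN" unfolding VN_def e_def using i by (cases "n $ i > 0") auto
  have c: "\<bar>(n - e) $ j\<bar> = \<bar>n $ j\<bar> - (if j = i then 1 else 0)" for j
    using i by (cases "n $ i > 0") (auto simp: e_def axis_def)
  have "l1 (n - e) = (\<Sum>j\<in>UNIV. \<bar>n $ j\<bar> - (if j = i then 1 else 0))"
    unfolding l1_def using c by simp
  also have "\<dots> = l1 n - 1" unfolding l1_def by (simp add: sum_subtractf)
  finally have "l1 (n - e) < t" using t by simp
  moreover have "\<forall>j. \<bar>(n - e) $ j\<bar> \<le> R" 
  proof
    fix j show "\<bar>(n - e) $ j\<bar> \<le> R" using c[of j] n[rule_format, of j] by (cases "j = i") auto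
  qed
  ultimately show ?thesis using eV by blast
qed

lemma geo2:
  fixes n e :: "'d::finite cell"
  assumes "e \<in> VN" "l1 (n - e) < t"
  shows "l1 n \<le> t"
proof -
  have "l1 n \<le> l1 (n - e) + l1 e" using l1_add[of "n - e" e] by simp
  then show ?thesis using VN_l1[OF assms(1)] assms(2) by simp
qed



lemma l1_eq0: "l1 n = 0 \<Longrightarrow> n = 0"
  unfolding l1_def by (subst (asm) sum_nonneg_eq_0_iff) (auto simp: vec_eq_iff)

lemma comp_le_l1: "\<bar>n $ i\<bar> \<le> l1 n"
  unfolding l1_def by (rule member_le_sum) auto

locale sim =
  fixes Q :: "'q set" and N :: "'d::finite cell set" and f :: "('d cell \<Rightarrow> 'q) \<Rightarrow> 'q"
    and le :: "'q \<Rightarrow> 'q \<Rightarrow> bool"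
  assumes CA: "is_CA Q N f" and po: "partial_order_on_set Q le"
    and frz: "\<forall>c\<in>configs Q. \<forall>z. le (global N f c z) (c z)"
begin

definition R :: int where "R = (\<Sum>n\<in>N. l1 n)"
definition Cb :: "'d cell set" where "Cb = {n. \<forall>i. \<bar>n $ i\<bar> \<le> R}"
definition T :: nat where "T = Suc (nat (int CARD('d) * R))"
definition PS :: "('d cell \<Rightarrow> 'q) set" where
  "PS = {p. \<forall>x. (x \<in> Cb \<longrightarrow> p x \<in> Q) \<and> (x \<notin> Cb \<longrightarrow> p x = undefined)}"
definition KS :: "('d cell \<Rightarrow> 'q option) set" where
  "KS = {K. \<forall>x. (x \<in> Cb \<longrightarrow> K x \<in> insert None (Some ` Q)) \<and> (x \<notin> Cb \<longrightarrow> K x = None)}"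
definition S :: "(('d cell \<Rightarrow> 'q) \<times> nat \<times> ('d cell \<Rightarrow> 'q option)) set" where
  "S = PS \<times> {..T} \<times> KS"
abbreviation enc where "enc \<equiv> to_nat_on S"
abbreviation dec where "dec \<equiv> from_nat_into S"
definition ht :: "'q \<Rightarrow> nat" where "ht q = card {q'\<in>Q. le q' q}"
definition h :: "('d cell \<Rightarrow> 'q) \<Rightarrow> nat" where "h p = (\<Sum>n\<in>Cb. ht (p n))"
definition rank :: "('d cell \<Rightarrow> 'q) \<times> nat \<times> ('d cell \<Rightarrow> 'q option) \<Rightarrow> nat" where
  "rank s = (case s of (p, t, K) \<Rightarrow> (T + 1) * h p + (T - t))"

definition newK :: "('d cell \<Rightarrow> nat) \<Rightarrow> 'd cell \<Rightarrow> 'q option" where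
  "newK P n = (let p0 = fst (dec (P 0)); Kn = (\<lambda>e. snd (snd (dec (P e)))) in
     if n \<notin> Cb then None
     else if n = 0 \<and> f (pat N p0 0) \<noteq> p0 0 then Some (f (pat N p0 0))
     else if \<exists>e\<in>VN. n - e \<in> Cb \<and> Kn e (n - e) \<noteq> None
       then (let e0 = (SOME e. e \<in> VN \<and> n - e \<in> Cb \<and> Kn e (n - e) \<noteq> None) in Kn e0 (n - e0))
     else None)"

definition cand where
  "cand P = (let p0 = fst (dec (P 0)); K' = newK P; m = Suc (Max ((\<lambda>e. fst (snd (dec (P e)))) ` VN)) in
     if K' = (\<lambda>_. None) then dec (P 0)
     else if m = T
       then ((\<lambda>n. if n \<in> Cb then (case K' n of Some v \<Rightarrow> v | None \<Rightarrow> p0 n) else undefined), 0, \<lambda>_. None)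
     else (p0, m, K'))"

definition g :: "('d cell \<Rightarrow> nat) \<Rightarrow> nat" where
  "g P = (if cand P \<in> S \<and> rank (cand P) < rank (dec (P 0)) then enc (cand P) else P 0)"

definition QG :: "nat set" where "QG = enc ` S"

lemma finQ: "finite Q" and finN: "finite N"
  using CA unfolding is_CA_def by auto

lemma fQ: "c \<in> configs Q \<Longrightarrow> global N f c z \<in> Q"
  using CA unfolding is_CA_def configs_def global_def pat_def by auto

lemma R_nonneg: "0 \<le> R" unfolding R_def by (simp add: sum_nonneg l1_nonneg)

lemma N_Cb: "N \<subseteq> Cb"
proof
  fix n assume n: "n \<in> N"
  have "l1 n \<le> R" unfolding R_def using n finN l1_nonneg by (intro member_le_sum) auto
  then show "n \<in> Cb" unfolding Cb_def using comp_le_l1 order_trans by blast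
qed

lemma zero_Cb: "0 \<in> Cb" unfolding Cb_def using R_nonneg by simp

lemma finCb: "finite Cb" unfolding Cb_def by (rule finite_cube)

lemma l1_T: "n \<in> Cb \<Longrightarrow> l1 n < int T"
proof -
  assume "n \<in> Cb"
  then have "l1 n \<le> (\<Sum>i\<in>(UNIV::'d set). R)" unfolding l1_def Cb_def by (intro sum_mono) auto
  then show ?thesis unfolding T_def using R_nonneg by simp
qed

lemma finPS: "finite PS"
  unfolding PS_def by (rule finite_set_of_finite_funs[OF finCb finQ])

lemma finKS: "finite KS"
  unfolding KS_def by (rule finite_set_of_finite_funs[OF finCb]) (simp add: finQ)

lemma finS: "finite S" unfolding S_def using finPS finKS by simp

lemma cS: "countable S" using finS by (rule countable_finite)

lemma dec_enc[simp]: "s \<in> S \<Longrightarrow> dec (enc s) = s" using cS by simp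

lemma enc_inj: "s \<in> S \<Longrightarrow> s' \<in> S \<Longrightarrow> enc s = enc s' \<Longrightarrow> s = s'"
  using inj_on_to_nat_on[OF cS] by (meson inj_onD)

lemma pat0: "pat (VN :: 'd cell set) P z 0 = P z" unfolding pat_def by (simp add: zero_VN)

lemma g_CA: "is_CA QG VN g"
  unfolding is_CA_def
proof (intro conjI allI impI)
  show "finite QG" unfolding QG_def using finS by simp
  show "finite (VN :: 'd cell set)" by (rule finite_VN)
  fix p :: "'d cell \<Rightarrow> nat" assume "(\<forall>n\<in>VN. p n \<in> QG) \<and> (\<forall>n. n \<notin> VN \<longrightarrow> p n = undefined)"
  then have "p 0 \<in> QG" using zero_VN by blast
  then show "g p \<in> QG" unfolding g_def QG_def by auto
qed

lemma g_freezing: "freezing QG VN g"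
  unfolding freezing_def
proof (intro exI[of _ "\<lambda>a b. a = b \<or> rank (dec a) < rank (dec b)"] conjI ballI allI)
  show "partial_order_on_set QG (\<lambda>a b. a = b \<or> rank (dec a) < rank (dec b))"
    unfolding partial_order_on_set_def by auto
  fix c :: "'d cell \<Rightarrow> nat" and z assume "c \<in> configs QG"
  show "global VN g c z = c z \<or> rank (dec (global VN g c z)) < rank (dec (c z))"
    unfolding global_def g_def pat0 by auto
qed

end


context sim begin

definition Kt :: "('d cell \<Rightarrow> 'q) \<Rightarrow> nat \<Rightarrow> 'd cell \<Rightarrow> 'd cell \<Rightarrow> 'q option" where
  "Kt c t x n = (if n \<in> Cb \<and> l1 n < int t \<and> global N f c (x + n) \<noteq> c (x + n)
                 then Some (global N f c (x + n)) else None)"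

definition st where
  "st c t x = (pat Cb c x, if (\<exists>n. Kt c t x n \<noteq> None) then t else 0, Kt c t x)"

lemma pat_PS: "c \<in> configs Q \<Longrightarrow> pat Cb c x \<in> PS"
  unfolding PS_def pat_def configs_def by auto

lemma st_S: "c \<in> configs Q \<Longrightarrow> t \<le> T \<Longrightarrow> st c t x \<in> S"
  unfolding st_def S_def using pat_PS fQ by (auto simp: KS_def Kt_def)

lemma dec_P:
  assumes "c \<in> configs Q" "t \<le> T" "e \<in> VN"
  shows "dec (pat VN (\<lambda>y. enc (st c t y)) x e) = st c t (x + e)"
  using assms st_S unfolding pat_def by simp

lemma Kt_mono: "Kt c t x n \<noteq> None \<Longrightarrow> t \<le> t' \<Longrightarrow> Kt c t' x n \<noteq> None"
  unfolding Kt_def by (auto split: if_splits)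

lemma pat_N: "pat N (pat Cb c x) 0 = pat N c x"
  using N_Cb unfolding pat_def by (intro ext) auto

lemma f_pat: "f (pat N (pat Cb c x) 0) = global N f c x" unfolding global_def pat_N by simp

lemma newK_eq:
  assumes c: "c \<in> configs Q" and t: "t < T"
  shows "newK (pat VN (\<lambda>y. enc (st c t y)) x) = Kt c (Suc t) x"
proof
  fix n
  let ?P = "pat VN (\<lambda>y. enc (st c t y)) x"
  let ?F = "global N f c"
  have D: "\<And>e. e \<in> VN \<Longrightarrow> dec (?P e) = st c t (x + e)" using dec_P c t by simp
  have p0: "fst (dec (?P 0)) = pat Cb c x" using D[OF zero_VN] by (simp add: st_def)
  have Kn: "\<And>e. e \<in> VN \<Longrightarrow> snd (snd (dec (?P e))) = Kt c t (x + e)" using D by (simp add: st_def)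
  have KtE: "Kt c t (x + e) (n - e) \<noteq> None \<longleftrightarrow> n - e \<in> Cb \<and> l1 (n - e) < int t \<and> ?F (x + n) \<noteq> c (x + n)" for e
    unfolding Kt_def by (simp add: algebra_simps)
  have KtV: "Kt c t (x + e) (n - e) \<noteq> None \<Longrightarrow> Kt c t (x + e) (n - e) = Some (?F (x + n))" for e
    unfolding Kt_def by (simp add: algebra_simps split: if_splits)
  have c0: "pat Cb c x 0 = c x" using zero_Cb unfolding pat_def by simp
  define E where "E = (\<exists>e\<in>VN. n - e \<in> Cb \<and> Kt c t (x + e) (n - e) \<noteq> None)"
  have E': "(\<exists>e\<in>VN. n - e \<in> Cb \<and> snd (snd (dec (?P e))) (n - e) \<noteq> None) = E"
    unfolding E_def using Kn by auto
  have S': "(SOME e. e \<in> VN \<and> n - e \<in> Cb \<and> snd (snd (dec (?P e))) (n - e) \<noteq> None)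
     = (SOME e. e \<in> VN \<and> n - e \<in> Cb \<and> Kt c t (x + e) (n - e) \<noteq> None)"
    by (rule arg_cong[where f=Eps]) (use Kn in auto)
  show "newK ?P n = Kt c (Suc t) x n"
  proof (cases "n \<in> Cb")
    case False then show ?thesis unfolding newK_def Kt_def by simp
  next
    case nC: True
    show ?thesis
    proof (cases "n = 0 \<and> ?F x \<noteq> c x")
      case True then show ?thesis unfolding newK_def Let_def p0 f_pat c0 Kt_def using nC by simp
    next
      case nself: False
      have L: "newK ?P n = (if E then (let e0 = (SOME e. e \<in> VN \<and> n - e \<in> Cb \<and> Kt c t (x + e) (n - e) \<noteq> None)
                 in snd (snd (dec (?P e0))) (n - e0)) else None)"
        unfolding newK_def Let_def p0 f_pat c0 E' S' using nC nself by auto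
      show ?thesis
      proof (cases E)
        case True
        define e0 where "e0 = (SOME e. e \<in> VN \<and> n - e \<in> Cb \<and> Kt c t (x + e) (n - e) \<noteq> None)"
        have e0: "e0 \<in> VN \<and> n - e0 \<in> Cb \<and> Kt c t (x + e0) (n - e0) \<noteq> None"
          unfolding e0_def by (rule someI_ex) (use True E_def in blast)
        have "snd (snd (dec (?P e0))) (n - e0) = Some (?F (x + n))" using e0 Kn KtV by simp
        then have "newK ?P n = Some (?F (x + n))"
          unfolding L Let_def e0_def[symmetric] using True by simp
        moreover have "l1 n \<le> int t" using e0 KtE geo2 by blast
        moreover have "?F (x + n) \<noteq> c (x + n)" using e0 KtE by blast
        ultimately show ?thesis unfolding Kt_def using nC by simp
      next
        case False
        have "Kt c (Suc t) x n = None"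
        proof (rule ccontr)
          assume "Kt c (Suc t) x n \<noteq> None"
          then have h1: "l1 n \<le> int t" "?F (x + n) \<noteq> c (x + n)" unfolding Kt_def by (auto split: if_splits)
          show False
          proof (cases "t = 0")
            case True
            then have "n = 0" using h1 l1_nonneg[of n] l1_eq0 by simp
            then show False using nself h1 by simp
          next
            case False
            then have "1 \<le> int t" by simp
            from geo[OF _ this h1(1)] nC obtain e where "e \<in> VN" "n - e \<in> Cb" "l1 (n - e) < int t"
              unfolding Cb_def by blast
            then show False using \<open>\<not> E\<close> h1 KtE unfolding E_def by blast
          qed
        qed
        then show ?thesis using L False by simp
      qed
    qed
  qed
qed

lemma ex_nN: "K \<noteq> (\<lambda>_. None) \<Longrightarrow> \<exists>n. K n \<noteq> None"
proof (rule ccontr)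
  assume "K \<noteq> (\<lambda>_. None)" "\<not> (\<exists>n. K n \<noteq> None)"
  then show False by (metis ext)
qed

lemma Fc_conf: "c \<in> configs Q \<Longrightarrow> global N f c \<in> configs Q"
  using fQ unfolding configs_def by blast

lemma ht_mono:
  assumes "a \<in> Q" "b \<in> Q" "le a b"
  shows "ht a \<le> ht b" and "a \<noteq> b \<Longrightarrow> ht a < ht b"
proof -
  have tr: "\<And>x y z. x \<in> Q \<Longrightarrow> y \<in> Q \<Longrightarrow> z \<in> Q \<Longrightarrow> le x y \<Longrightarrow> le y z \<Longrightarrow> le x z"
    using po unfolding partial_order_on_set_def by blast
  have an: "\<And>x y. x \<in> Q \<Longrightarrow> y \<in> Q \<Longrightarrow> le x y \<Longrightarrow> le y x \<Longrightarrow> x = y"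
    using po unfolding partial_order_on_set_def by blast
  have rf: "le b b" using po assms unfolding partial_order_on_set_def by blast
  have sub: "{q'\<in>Q. le q' a} \<subseteq> {q'\<in>Q. le q' b}"
    using tr[OF _ assms(1,2) _ assms(3)] by blast
  then show "ht a \<le> ht b" unfolding ht_def using finQ by (intro card_mono) auto
  assume "a \<noteq> b"
  then have "b \<notin> {q'\<in>Q. le q' a}" "b \<in> {q'\<in>Q. le q' b}"
    using an[OF assms(1,2) assms(3)] rf assms(2) by auto
  then have "{q'\<in>Q. le q' a} \<subset> {q'\<in>Q. le q' b}" using sub by blast
  then show "ht a < ht b" unfolding ht_def using finQ by (intro psubset_card_mono) auto
qed

lemma maxcnt:
  assumes c: "c \<in> configs Q" and t: "t < T" and ne: "Kt c (Suc t) x \<noteq> (\<lambda>_. None)"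
  shows "Max ((\<lambda>e. fst (snd (dec (pat VN (\<lambda>y. enc (st c t y)) x e)))) ` VN) = t"
proof -
  let ?P = "pat VN (\<lambda>y. enc (st c t y)) x"
  have D: "\<And>e. e \<in> VN \<Longrightarrow> dec (?P e) = st c t (x + e)" using dec_P c t by simp
  have img: "(\<lambda>e. fst (snd (dec (?P e)))) ` VN = (\<lambda>e. fst (snd (st c t (x + e)))) ` VN"
    using D by (intro image_cong) auto
  have le: "\<And>y. y \<in> (\<lambda>e. fst (snd (st c t (x + e)))) ` VN \<Longrightarrow> y \<le> t"
    unfolding st_def by auto
  have mem: "t \<in> (\<lambda>e. fst (snd (st c t (x + e)))) ` VN"
  proof (cases "t = 0")
    case True
    then show ?thesis using zero_VN unfolding st_def by (intro image_eqI[of _ _ 0]) auto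
  next
    case False
    from ex_nN[OF ne] obtain n where "Kt c (Suc t) x n \<noteq> None" by blast
    then have n: "n \<in> Cb" "l1 n \<le> int t" "global N f c (x + n) \<noteq> c (x + n)"
      unfolding Kt_def by (auto split: if_splits)
    have "1 \<le> int t" using False by simp
    from geo[OF _ this n(2)] n(1) obtain e where e: "e \<in> VN" "n - e \<in> Cb" "l1 (n - e) < int t"
      unfolding Cb_def by blast
    have "Kt c t (x + e) (n - e) \<noteq> None" using e n unfolding Kt_def by (simp add: algebra_simps)
    then have "fst (snd (st c t (x + e))) = t" unfolding st_def by auto
    then show ?thesis using e(1) by (intro image_eqI[of _ _ e]) auto
  qed
  show ?thesis unfolding img by (rule Max_eqI) (use finite_VN le mem in auto)
qed

lemma rank_st: "rank (st c t x) \<ge> (T + 1) * h (pat Cb c x) + (T - t)"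
  unfolding rank_def st_def by auto

lemma step:
  assumes c: "c \<in> configs Q" and t: "t < T"
  shows "g (pat VN (\<lambda>y. enc (st c t y)) x) =
    (if Suc t < T then enc (st c (Suc t) x) else enc (pat Cb (global N f c) x, 0, \<lambda>_. None))"
proof -
  let ?P = "pat VN (\<lambda>y. enc (st c t y)) x"
  let ?F = "global N f c"
  have P0: "?P 0 = enc (st c t x)" unfolding pat_def by (simp add: zero_VN)
  have D0: "dec (?P 0) = st c t x" using dec_P[OF c _ zero_VN] t by simp
  have NK: "newK ?P = Kt c (Suc t) x" using newK_eq c t by simp
  show ?thesis
  proof (cases "Kt c (Suc t) x = (\<lambda>_. None)")
    case True
    have K0: "Kt c t x = (\<lambda>_. None)"
    proof (rule ext)
      fix n show "Kt c t x n = None"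
      proof (rule ccontr)
        assume "Kt c t x n \<noteq> None"
        then have "Kt c (Suc t) x n \<noteq> None" by (rule Kt_mono) simp
        with True show False by simp
      qed
    qed
    have cd: "cand ?P = st c t x" unfolding cand_def Let_def NK D0 using True by simp
    have gP: "g ?P = enc (st c t x)" unfolding g_def cd P0 by simp
    have stt: "st c t x = (pat Cb c x, 0, \<lambda>_. None)" unfolding st_def K0 by simp
    show ?thesis
    proof (cases "Suc t < T")
      case True
      then show ?thesis unfolding gP stt using \<open>Kt c (Suc t) x = (\<lambda>_. None)\<close> by (simp add: st_def)
    next
      case False
      then have T': "Suc t = T" using t by simp
      have "pat Cb ?F x = pat Cb c x"
      proof (rule ext)
        fix n show "pat Cb ?F x n = pat Cb c x n"
        proof (cases "n \<in> Cb")
          case True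
          have "Kt c (Suc t) x n = None" using \<open>Kt c (Suc t) x = (\<lambda>_. None)\<close> by simp
          then show ?thesis using True l1_T[OF True] T' unfolding pat_def Kt_def by (auto split: if_splits)
        qed (simp add: pat_def)
      qed
      then show ?thesis unfolding gP stt using False by simp
    qed
  next
    case False
    have M: "Suc (Max ((\<lambda>e. fst (snd (dec (?P e)))) ` VN)) = Suc t" using maxcnt[OF c t False] by simp
    have Kne: "newK ?P \<noteq> (\<lambda>_. None)" using NK False by simp
    have p0: "fst (dec (?P 0)) = pat Cb c x" by (simp only: D0) (simp add: st_def)
    show ?thesis
    proof (cases "Suc t < T")
      case True
      have cd: "cand ?P = st c (Suc t) x"
        unfolding cand_def Let_def M p0 NK using True False ex_nN[OF False] by (simp add: st_def)
      have inS: "cand ?P \<in> S" unfolding cd using st_S[OF c] True by simp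
      have "rank (cand ?P) = (T + 1) * h (pat Cb c x) + (T - Suc t)"
        by (simp only: cd) (use ex_nN[OF False] in \<open>auto simp: rank_def st_def\<close>)
      also have "\<dots> < rank (dec (?P 0))" unfolding D0 using rank_st[where c=c and t=t and x=x] True by simp
      finally show ?thesis unfolding g_def using inS True cd by simp
    next
      case notlt: False
      then have T': "Suc t = T" using t by simp
      define p' where "p' = (\<lambda>n. if n \<in> Cb then (case Kt c (Suc t) x n of Some v \<Rightarrow> v | None \<Rightarrow> pat Cb c x n) else undefined)"
      have p'eq: "p' = pat Cb ?F x"
      proof (rule ext)
        fix n show "p' n = pat Cb ?F x n"
          using l1_T[of n] T' unfolding p'_def pat_def Kt_def by (auto split: if_splits)
      qed
      have cd: "cand ?P = (p', 0, \<lambda>_. None)"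
        unfolding cand_def Let_def M p0 NK p'_def using T' False by simp
      have inS: "cand ?P \<in> S" by (simp only: cd p'eq) (use pat_PS[OF Fc_conf[OF c]] in \<open>simp add: S_def KS_def\<close>)
      from ex_nN[OF False] obtain n0 where "Kt c (Suc t) x n0 \<noteq> None" by blast
      then have n0: "n0 \<in> Cb" "?F (x + n0) \<noteq> c (x + n0)" unfolding Kt_def by (auto split: if_splits)
      have cQ: "\<And>z. c z \<in> Q" using c unfolding configs_def by auto
      have FQ: "\<And>z. ?F z \<in> Q" using fQ[OF c] by auto
      have lez: "\<And>z. le (?F z) (c z)" using frz c by auto
      have "h p' < h (pat Cb c x)"
        unfolding h_def p'eq
      proof (rule sum_strict_mono_ex1[OF finCb])
        show "\<forall>n\<in>Cb. ht (pat Cb ?F x n) \<le> ht (pat Cb c x n)"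
          unfolding pat_def using ht_mono(1)[OF FQ cQ lez] by simp
        show "\<exists>n\<in>Cb. ht (pat Cb ?F x n) < ht (pat Cb c x n)"
          using n0 ht_mono(2)[OF FQ cQ lez] unfolding pat_def by auto
      qed
      then have "rank (p', 0, \<lambda>_. None) < (T + 1) * h (pat Cb c x)"
        unfolding rank_def
      proof -
        assume "h p' < h (pat Cb c x)"
        then have "(T + 1) * (h p' + 1) \<le> (T + 1) * h (pat Cb c x)" by (intro mult_le_mono2) simp
        then show "(case (p', 0, \<lambda>_. None) of (p, t, K) \<Rightarrow> (T + 1) * h p + (T - t)) < (T + 1) * h (pat Cb c x)"
          by simp
      qed
      then have "rank (cand ?P) < (T + 1) * h (pat Cb c x)" by (simp only: cd)
      also have "\<dots> \<le> rank (dec (?P 0))" unfolding D0 using rank_st[where c=c and t=t and x=x] by simp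
      finally show ?thesis unfolding g_def using inS notlt cd p'eq by simp
    qed
  qed
qed

lemma st0: "st c 0 y = (pat Cb c y, 0, \<lambda>_. None)"
proof -
  have "\<not> l1 n < 0" for n :: "'d cell" using l1_nonneg[of n] by simp
  then have "Kt c 0 y = (\<lambda>_. None)" unfolding Kt_def by (intro ext) simp
  then show ?thesis unfolding st_def by simp
qed

lemma iter:
  assumes c: "c \<in> configs Q"
  shows "t < T \<Longrightarrow> (global VN g ^^ t) (\<lambda>y. enc (pat Cb c y, 0, \<lambda>_. None)) = (\<lambda>y. enc (st c t y))"
proof (induction t)
  case 0 then show ?case by (simp add: st0)
next
  case (Suc t)
  then have "(global VN g ^^ Suc t) (\<lambda>y. enc (pat Cb c y, 0, \<lambda>_. None)) = global VN g (\<lambda>y. enc (st c t y))"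
    by simp
  also have "\<dots> = (\<lambda>y. enc (st c (Suc t) y))"
    unfolding global_def[of "VN :: 'd cell set"] using step[OF c, of t] Suc.prems by (intro ext) simp
  finally show ?case .
qed

lemma final:
  assumes c: "c \<in> configs Q"
  shows "(global VN g ^^ T) (\<lambda>y. enc (pat Cb c y, 0, \<lambda>_. None)) = (\<lambda>y. enc (pat Cb (global N f c) y, 0, \<lambda>_. None))"
proof -
  have T: "T = Suc (T - 1)" unfolding T_def by simp
  have "(global VN g ^^ T) (\<lambda>y. enc (pat Cb c y, 0, \<lambda>_. None)) = global VN g ((global VN g ^^ (T - 1)) (\<lambda>y. enc (pat Cb c y, 0, \<lambda>_. None)))"
    by (subst T) simp
  also have "\<dots> = global VN g (\<lambda>y. enc (st c (T - 1) y))" using iter[OF c, of "T - 1"] T by simp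
  also have "\<dots> = (\<lambda>y. enc (pat Cb (global N f c) y, 0, \<lambda>_. None))"
    unfolding global_def[of "VN :: 'd cell set"] using step[OF c, of "T - 1"] T by (intro ext) simp
  finally show ?thesis .
qed

lemma bm: "blockmap 1 Cb (\<lambda>p r. enc (p, 0, \<lambda>_. None)) c = (\<lambda>y. enc (pat Cb c y, 0, \<lambda>_. None))"
  unfolding blockmap_def by simp

lemma init_S: "c \<in> configs Q \<Longrightarrow> (pat Cb c y, 0, \<lambda>_. None) \<in> S"
  using pat_PS unfolding S_def KS_def by simp

lemma sim_main: "simulates QG VN g Q N f"
proof -
  let ?phi = "\<lambda>p r. enc (p, 0, \<lambda>_. None)"
  have A: "0 < T" unfolding T_def by simp
  have B: "\<forall>i. 0 < (1 :: 'd cell) $ i" by simp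
  have C1: "\<forall>c\<in>configs Q. blockmap 1 Cb ?phi c \<in> configs QG"
    unfolding bm configs_def QG_def using init_S by (auto simp: configs_def)
  have C3: "\<forall>c\<in>configs Q. blockmap 1 Cb ?phi (global N f c) = (global VN g ^^ T) (blockmap 1 Cb ?phi c)"
    unfolding bm using final by simp
  have C2: "inj_on (blockmap 1 Cb ?phi) (configs Q)"
  proof (rule inj_onI)
    fix c c' assume c: "c \<in> configs Q" and c': "c' \<in> configs Q"
      and eq: "blockmap 1 Cb ?phi c = blockmap 1 Cb ?phi c'"
    show "c = c'"
    proof (rule ext)
      fix y
      have "enc (pat Cb c y, 0, \<lambda>_. None) = enc (pat Cb c' y, 0, \<lambda>_. None)"
        using eq unfolding bm by metis
      then have "pat Cb c y = pat Cb c' y" using enc_inj[OF init_S[OF c] init_S[OF c']] by simp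
      then have "pat Cb c y 0 = pat Cb c' y 0" by simp
      then show "c y = c' y" using zero_Cb unfolding pat_def by simp
    qed
  qed
  show ?thesis unfolding simulates_def
    apply (rule exI[of _ T], rule conjI[OF A])
    apply (rule exI[of _ 1], rule conjI[OF B])
    apply (rule exI[of _ Cb], rule conjI[OF finCb], rule conjI[OF zero_Cb])
    apply (rule exI[of _ ?phi])
    using C1 C2 C3 by blast
qed

lemma main: "\<exists>(QG' :: nat set) g'. is_CA QG' (VN :: 'd cell set) g' \<and> freezing QG' VN g' \<and> simulates QG' VN g' Q N f"
  using g_CA g_freezing sim_main by blast

end

theorem lemma5:
  fixes Q :: "'q set" and N :: "('d::finite) cell set" and f :: "('d cell \<Rightarrow> 'q) \<Rightarrow> 'q"
  assumes "is_CA Q N f" and "freezing Q N f"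
  shows "\<exists>(QG :: nat set) g. is_CA QG (VN :: 'd cell set) g \<and> freezing QG VN g
            \<and> simulates QG VN g Q N f"
proof -
  from assms(2) obtain le where po: "partial_order_on_set Q le"
    and frz: "\<forall>c\<in>configs Q. \<forall>z. le (global N f c z) (c z)"
    unfolding freezing_def by blast
  interpret sim Q N f le using assms(1) po frz by unfold_locales
  show ?thesis by (rule main)
qed

end
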